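(* Let $s\ge3$ and $k\ge1$ be integers and let $T$ be a tree with every vertex of degree at most $s$ and with $v(T)\ge k+1$. Then $T$ has a branch $B$ such that $v(B)\le (s-1)k+1$ and $\tau_k(B)=1$.
   Context: All graphs are finite and simple; $v(\cdot)$ is the number of vertices. A branch of a tree $T$ is a subtree $B$ of $T$ such that either $B=T$ or $T-V(B)$ is also a (nonempty) tree. For $k\ge1$, $\tau_k(G)$ denotes the maximum number of pairwise vertex-disjoint subgraphs of $G$ each of which is a tree with exactly $k$ edges. *)

theory Defs
  imports Main
begin

definition graph :: "'a set \<Rightarrow> 'a set set \<Rightarrow> bool" where
  "graph V E \<longleftrightarrow> finite V \<and> (\<forall>e\<in>E. \<exists>x y. x \<in> V \<and> y \<in> V \<and> x \<noteq> y \<and> e = {x, y})"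

definition adj :: "'a set set \<Rightarrow> 'a \<Rightarrow> 'a \<Rightarrow> bool" where
  "adj E x y \<longleftrightarrow> x \<noteq> y \<and> {x, y} \<in> E"

definition degree :: "'a set set \<Rightarrow> 'a \<Rightarrow> nat" where
  "degree E v = card {e \<in> E. v \<in> e}"

definition connected_graph :: "'a set \<Rightarrow> 'a set set \<Rightarrow> bool" where
  "connected_graph V E \<longleftrightarrow> V \<noteq> {} \<and> (\<forall>x\<in>V. \<forall>y\<in>V. (adj E)\<^sup>*\<^sup>* x y)"

definition is_cycle :: "'a set set \<Rightarrow> 'a list \<Rightarrow> bool" where
  "is_cycle E cs \<longleftrightarrow> length cs \<ge> 3 \<and> distinct cs \<and>
     (\<forall>i < length cs. adj E (cs ! i) (cs ! ((i + 1) mod length cs)))"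

definition tree :: "'a set \<Rightarrow> 'a set set \<Rightarrow> bool" where
  "tree V E \<longleftrightarrow> graph V E \<and> connected_graph V E \<and> \<not> (\<exists>cs. set cs \<subseteq> V \<and> is_cycle E cs)"

definition subgraph :: "'a set \<Rightarrow> 'a set set \<Rightarrow> 'a set \<Rightarrow> 'a set set \<Rightarrow> bool" where
  "subgraph V' E' V E \<longleftrightarrow> graph V' E' \<and> V' \<subseteq> V \<and> E' \<subseteq> E"

definition branch :: "'a set \<Rightarrow> 'a set set \<Rightarrow> 'a set \<Rightarrow> 'a set set \<Rightarrow> bool" where
  "branch VB EB V E \<longleftrightarrow> subgraph VB EB V E \<and> tree VB EB \<and>
     ((VB = V \<and> EB = E) \<or>
      (V - VB \<noteq> {} \<and> tree (V - VB) {e \<in> E. e \<inter> VB = {}}))"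

definition tau :: "nat \<Rightarrow> 'a set \<Rightarrow> 'a set set \<Rightarrow> nat" where
  "tau k V E = Max {card F | F.
      (\<forall>(V', E') \<in> F. subgraph V' E' V E \<and> tree V' E' \<and> card E' = k) \<and>
      (\<forall>p\<in>F. \<forall>q\<in>F. p \<noteq> q \<longrightarrow> fst p \<inter> fst q = {})}"

end

theory Submission
  imports Defs
begin

lemma adj_sym: "adj F x y = adj F y x"
  unfolding adj_def by (auto simp: insert_commute)

lemma rtr_sym: "(adj F)\<^sup>*\<^sup>* x y \<Longrightarrow> (adj F)\<^sup>*\<^sup>* y x"
proof (induction rule: rtranclp_induct)
  case base then show ?case by simp
next
  case (step y z)
  then have "adj F z y" using adj_sym by metis
  then show ?case using step(3) by (meson converse_rtranclp_into_rtranclp)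
qed

lemma rtr_mono: "(adj F)\<^sup>*\<^sup>* x y \<Longrightarrow> F \<subseteq> G \<Longrightarrow> (adj G)\<^sup>*\<^sup>* x y"
proof (induction rule: rtranclp_induct)
  case base then show ?case by simp
next
  case (step y z)
  then have "adj G y z" unfolding adj_def by auto
  then show ?case using step by (meson rtranclp.rtrancl_into_rtrancl)
qed

lemma graph_finV: "graph V E \<Longrightarrow> finite V"
  unfolding graph_def by (erule conjunct1)

lemma graph_edge_sub: "graph V E \<Longrightarrow> e \<in> E \<Longrightarrow> e \<subseteq> V"
proof -
  assume "graph V E" "e \<in> E"
  then obtain x y where "x \<in> V" "y \<in> V" "e = {x,y}" unfolding graph_def by blast
  then show ?thesis by simp
qed

lemma graph_edge: "graph V E \<Longrightarrow> {x,y} \<in> E \<Longrightarrow> x \<in> V \<and> y \<in> V"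
  using graph_edge_sub by blast

lemma graph_finE: "graph V E \<Longrightarrow> finite E"
proof -
  assume g: "graph V E"
  then have "E \<subseteq> Pow V" using graph_edge_sub by blast
  moreover have "finite V" using g graph_def by auto
  ultimately show ?thesis using finite_subset by blast
qed

lemma adj_V: "graph V E \<Longrightarrow> F \<subseteq> E \<Longrightarrow> adj F x y \<Longrightarrow> x \<in> V \<and> y \<in> V"
proof -
  assume a: "graph V E" "F \<subseteq> E" "adj F x y"
  then have "{x,y} \<in> E" unfolding adj_def by auto
  then show ?thesis using graph_edge[OF a(1)] by simp
qed

lemma rtr_V: "(adj F)\<^sup>*\<^sup>* x y \<Longrightarrow> graph V E \<Longrightarrow> F \<subseteq> E \<Longrightarrow> x \<in> V \<Longrightarrow> y \<in> V"
proof (induction rule: rtranclp_induct)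
  case (step y z)
  then show ?case using adj_V[of V E F y z] by simp
qed simp

lemma conn_root:
  assumes "r \<in> V" "\<forall>x\<in>V. (adj E)\<^sup>*\<^sup>* r x"
  shows "connected_graph V E"
  unfolding connected_graph_def
proof (intro conjI ballI)
  show "V \<noteq> {}" using assms by auto
  fix x y assume "x \<in> V" "y \<in> V"
  then have "(adj E)\<^sup>*\<^sup>* x r" "(adj E)\<^sup>*\<^sup>* r y" using assms(2) rtr_sym[of E r x] by auto
  then show "(adj E)\<^sup>*\<^sup>* x y" by (rule rtranclp_trans)
qed

fun walk :: "'a set set \<Rightarrow> 'a list \<Rightarrow> bool" where
  "walk F [] = True"
| "walk F [x] = True"
| "walk F (x # y # xs) = (adj F x y \<and> walk F (y # xs))"

lemma walk_tl: "walk F (a # xs) \<Longrightarrow> walk F xs"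
  by (cases xs) auto

lemma walk_suffix: "walk F (p @ q) \<Longrightarrow> walk F q"
  by (induction p) (auto dest: walk_tl)

lemma walk_nth: "walk F xs \<Longrightarrow> Suc i < length xs \<Longrightarrow> adj F (xs ! i) (xs ! Suc i)"
proof (induction F xs arbitrary: i rule: walk.induct)
  case (3 F x y xs)
  then show ?case by (cases i) auto
qed auto

lemma walk_V: "walk F xs \<Longrightarrow> xs \<noteq> [] \<Longrightarrow> hd xs \<in> V \<Longrightarrow> graph V E \<Longrightarrow> F \<subseteq> E \<Longrightarrow> set xs \<subseteq> V"
proof (induction F xs rule: walk.induct)
  case (3 F x y xs)
  then have "y \<in> V" using adj_V[of V E F x y] by simp
  then show ?case using 3 by simp
qed auto

lemma rtr_path:
  assumes "(adj F)\<^sup>*\<^sup>* x y"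
  shows "\<exists>xs. xs \<noteq> [] \<and> hd xs = x \<and> last xs = y \<and> distinct xs \<and> walk F xs"
  using assms
proof (induction rule: converse_rtranclp_induct)
  case base
  then show ?case by (intro exI[of _ "[y]"]) auto
next
  case (step x z)
  then obtain ys where ys: "ys \<noteq> []" "hd ys = z" "last ys = y" "distinct ys" "walk F ys" by blast
  show ?case
  proof (cases "x \<in> set ys")
    case True
    then obtain p q where pq: "ys = p @ x # q" by (meson split_list)
    have "walk F (x # q)" using ys(5) pq walk_suffix[of F p "x # q"] by simp
    moreover have "distinct (x # q)" using ys(4) pq by simp
    moreover have "last (x # q) = y" using ys(3) pq by simp
    ultimately show ?thesis by (intro exI[of _ "x # q"]) simp
  next
    case False
    obtain ys' where "ys = z # ys'" using ys by (cases ys) auto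
    have "walk F (x # ys)" using ys(5) step(1) \<open>ys = z # ys'\<close> by simp
    moreover have "distinct (x # ys)" using ys(4) False by simp
    moreover have "last (x # ys) = y" using ys(1,3) by simp
    ultimately show ?thesis by (intro exI[of _ "x # ys"]) simp
  qed
qed


definition acyc :: "'a set \<Rightarrow> 'a set set \<Rightarrow> bool" where
  "acyc V E \<longleftrightarrow> \<not> (\<exists>cs. set cs \<subseteq> V \<and> is_cycle E cs)"

lemma tree_iff: "tree V E \<longleftrightarrow> graph V E \<and> connected_graph V E \<and> acyc V E"
  unfolding tree_def acyc_def by simp

lemma adj_mono: "adj F x y \<Longrightarrow> F \<subseteq> G \<Longrightarrow> adj G x y"
  unfolding adj_def by auto

lemma cycle_mono: "is_cycle F cs \<Longrightarrow> F \<subseteq> G \<Longrightarrow> is_cycle G cs"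
  unfolding is_cycle_def using adj_mono[of F _ _ G] by simp

lemma acyc_sub: "acyc V E \<Longrightarrow> V' \<subseteq> V \<Longrightarrow> E' \<subseteq> E \<Longrightarrow> acyc V' E'"
  unfolding acyc_def using cycle_mono[of E' _ E] by (meson order.trans)

lemma no_reach:
  assumes g: "graph V E" and ac: "acyc V E" and e: "{a,b} \<in> E" and ab: "a \<noteq> b"
  shows "\<not> (adj (E - {{a,b}}))\<^sup>*\<^sup>* b a"
proof
  let ?F = "E - {{a,b}}"
  assume "(adj ?F)\<^sup>*\<^sup>* b a"
  then obtain xs where xs: "xs \<noteq> []" "hd xs = b" "last xs = a" "distinct xs" "walk ?F xs"
    using rtr_path[of ?F b a] by blast
  have bV: "b \<in> V" using graph_edge[OF g e] by simp
  have setV: "set xs \<subseteq> V" using walk_V[OF xs(5) xs(1), of V E] xs(2) bV g by auto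
  have len2: "length xs \<ge> 2"
  proof (rule ccontr)
    assume a2: "\<not> length xs \<ge> 2"
    have "length xs > 0" using xs(1) by simp
    then have "length xs = 1" using a2 by linarith
    then obtain c where "xs = [c]" by (metis length_0_conv length_Suc_conv One_nat_def)
    then show False using xs ab by simp
  qed
  have len3: "length xs \<ge> 3"
  proof (rule ccontr)
    assume "\<not> length xs \<ge> 3"
    then have "length xs = 2" using len2 by simp
    then obtain c d where cd: "xs = [c, d]"
      by (cases xs; cases "tl xs") auto
    then have "c = b" "d = a" using xs by auto
    then have "adj ?F b a" using xs(5) cd by simp
    then show False unfolding adj_def by (auto simp: insert_commute)
  qed
  have "is_cycle E xs"
    unfolding is_cycle_def
  proof (intro conjI allI impI)
    show "3 \<le> length xs" by (rule len3)
    show "distinct xs" by (rule xs(4))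
    fix i assume i: "i < length xs"
    show "adj E (xs ! i) (xs ! ((i + 1) mod length xs))"
    proof (cases "Suc i < length xs")
      case True
      then have "adj ?F (xs ! i) (xs ! Suc i)" using walk_nth[OF xs(5)] by simp
      then show ?thesis using True adj_mono[of ?F] by auto
    next
      case False
      then have ii: "i = length xs - 1" using i by simp
      then have "i + 1 = length xs" using i by simp
      then have "(i + 1) mod length xs = 0" by simp
      moreover have "xs ! i = a" using ii xs(1,3) by (simp add: last_conv_nth)
      moreover have "xs ! 0 = b" using xs(1,2) by (simp add: hd_conv_nth)
      ultimately show ?thesis using e ab unfolding adj_def by (simp add: insert_commute)
    qed
  qed
  then show False using ac setV unfolding acyc_def by blast
qed


definition side :: "'a set \<Rightarrow> 'a set set \<Rightarrow> 'a \<Rightarrow> 'a \<Rightarrow> 'a set" where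
  "side V E a b = {x\<in>V. (adj (E - {{a,b}}))\<^sup>*\<^sup>* b x}"

lemma side_swap: "side V E b a = {x\<in>V. (adj (E - {{a,b}}))\<^sup>*\<^sup>* a x}"
  unfolding side_def by (simp add: insert_commute)

lemma side_sub: "side V E a b \<subseteq> V"
  unfolding side_def by auto

lemma side_b: "graph V E \<Longrightarrow> {a,b} \<in> E \<Longrightarrow> b \<in> side V E a b"
proof -
  assume "graph V E" "{a,b} \<in> E"
  then have "b \<in> V" using graph_edge[of V E a b] by simp
  then show ?thesis unfolding side_def by simp
qed

lemma side_a: "graph V E \<Longrightarrow> acyc V E \<Longrightarrow> {a,b} \<in> E \<Longrightarrow> a \<noteq> b \<Longrightarrow> a \<notin> side V E a b"
  unfolding side_def using no_reach[of V E a b] by simp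

lemma side_close:
  assumes g: "graph V E" and x: "x \<in> side V E a b" and xy: "adj (E - {{a,b}}) x y"
  shows "y \<in> side V E a b"
proof -
  have "y \<in> V" using adj_V[OF g _ xy] by auto
  moreover have "(adj (E - {{a,b}}))\<^sup>*\<^sup>* b y" using x xy unfolding side_def
    by (auto intro: rtranclp.rtrancl_into_rtrancl)
  ultimately show ?thesis unfolding side_def by simp
qed

lemma side_cover:
  assumes g: "graph V E" and c: "connected_graph V E" and e: "{a,b} \<in> E" and x: "x \<in> V"
  shows "x \<in> side V E a b \<or> x \<in> side V E b a"
proof -
  let ?F = "E - {{a,b}}"
  have aV: "a \<in> V" using graph_edge[OF g e] by simp
  have "(adj E)\<^sup>*\<^sup>* a x" using c aV x unfolding connected_graph_def by blast
  then have "(adj ?F)\<^sup>*\<^sup>* b x \<or> (adj ?F)\<^sup>*\<^sup>* a x"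
  proof (induction rule: rtranclp_induct)
    case base then show ?case by simp
  next
    case (step y z)
    show ?case
    proof (cases "{y,z} = {a,b}")
      case True
      then have "z = a \<or> z = b" by (metis doubleton_eq_iff)
      then show ?thesis by auto
    next
      case False
      then have "adj ?F y z" using step(2) unfolding adj_def by auto
      then show ?thesis using step(3) by (meson rtranclp.rtrancl_into_rtrancl)
    qed
  qed
  then show ?thesis using x unfolding side_def by (auto simp: insert_commute)
qed

lemma side_disj:
  assumes g: "graph V E" and ac: "acyc V E" and e: "{a,b} \<in> E" and ab: "a \<noteq> b"
  shows "side V E a b \<inter> side V E b a = {}"
proof (rule ccontr)
  let ?F = "E - {{a,b}}"
  assume "side V E a b \<inter> side V E b a \<noteq> {}"
  then obtain x where "(adj ?F)\<^sup>*\<^sup>* b x" "(adj ?F)\<^sup>*\<^sup>* a x"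
    unfolding side_def by (auto simp: insert_commute)
  then have "(adj ?F)\<^sup>*\<^sup>* b x" "(adj ?F)\<^sup>*\<^sup>* x a" using rtr_sym[of ?F a x] by auto
  then have "(adj ?F)\<^sup>*\<^sup>* b a" by (rule rtranclp_trans)
  then show False using no_reach[OF g ac e ab] by simp
qed

lemma side_edge:
  assumes g: "graph V E" and c: "connected_graph V E" and e: "{a,b} \<in> E"
    and f: "f \<in> E" "f \<noteq> {a,b}"
  shows "f \<subseteq> side V E a b \<or> f \<subseteq> side V E b a"
proof -
  have "\<exists>x y. x \<in> V \<and> y \<in> V \<and> x \<noteq> y \<and> f = {x,y}" using g f unfolding graph_def by simp
  then obtain x y where xy: "x \<in> V" "y \<in> V" "x \<noteq> y" "f = {x,y}" by blast
  have adjF: "adj (E - {{a,b}}) x y" using xy f unfolding adj_def by auto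
  have adjF': "adj (E - {{b,a}}) x y" using adjF by (simp add: insert_commute)
  from side_cover[OF g c e xy(1)] show ?thesis
  proof
    assume "x \<in> side V E a b"
    then show ?thesis using side_close[OF g _ adjF] xy by auto
  next
    assume "x \<in> side V E b a"
    then show ?thesis using side_close[OF g _ adjF'] xy by auto
  qed
qed

lemma side_tree:
  assumes g: "graph V E" and ac: "acyc V E" and e: "{a,b} \<in> E"
  shows "tree (side V E a b) {f\<in>E. f \<subseteq> side V E a b}"
proof -
  let ?S = "side V E a b" and ?F = "E - {{a,b}}"
  let ?ES = "{f\<in>E. f \<subseteq> ?S}"
  have gS: "graph ?S ?ES"
    unfolding graph_def
  proof (intro conjI ballI)
    have "finite V" using g by (rule graph_finV)
    then show "finite ?S" by (rule finite_subset[OF side_sub])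
    fix f assume f: "f \<in> ?ES"
    then have "\<exists>x y. x \<in> V \<and> y \<in> V \<and> x \<noteq> y \<and> f = {x,y}" using g unfolding graph_def by simp
    then obtain x y where "x \<noteq> y" "f = {x,y}" by blast
    then show "\<exists>x y. x \<in> ?S \<and> y \<in> ?S \<and> x \<noteq> y \<and> f = {x, y}" using f by auto
  qed
  have "(adj ?ES)\<^sup>*\<^sup>* b x" if x: "x \<in> ?S" for x
  proof -
    have "(adj ?F)\<^sup>*\<^sup>* b x" using x unfolding side_def by simp
    then have "x \<in> ?S \<and> (adj ?ES)\<^sup>*\<^sup>* b x"
    proof (induction rule: rtranclp_induct)
      case base then show ?case using side_b[OF g e] by simp
    next
      case (step y z)
      have zS: "z \<in> ?S" using side_close[OF g _ step(2)] step(3) by simp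
      have "adj ?ES y z" using step(2) step(3) zS unfolding adj_def by auto
      then show ?case using step(3) zS by (meson rtranclp.rtrancl_into_rtrancl)
    qed
    then show ?thesis by simp
  qed
  then have cS: "connected_graph ?S ?ES" using conn_root[of b ?S ?ES] side_b[OF g e] by blast
  have "acyc ?S ?ES" using acyc_sub[OF ac side_sub, of ?ES] by auto
  then show ?thesis using gS cS by (simp add: tree_iff)
qed


lemma tree_card: "tree V E \<Longrightarrow> card E + 1 \<le> card V"
proof (induction "card V" arbitrary: V E rule: less_induct)
  case less
  have g: "graph V E" and c: "connected_graph V E" and ac: "acyc V E"
    using less.prems by (simp_all add: tree_iff)
  have fV: "finite V" using g by (rule graph_finV)
  have fE: "finite E" using g by (rule graph_finE)
  show ?case
  proof (cases "E = {}")
    case True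
    have "V \<noteq> {}" using c unfolding connected_graph_def by simp
    then have "card V \<ge> 1" using fV by (simp add: Suc_le_eq card_gt_0_iff)
    then show ?thesis using True by simp
  next
    case False
    then obtain f where f: "f \<in> E" by blast
    have "\<exists>x y. x \<in> V \<and> y \<in> V \<and> x \<noteq> y \<and> f = {x,y}" using g f unfolding graph_def by simp
    then obtain a b where ab: "a \<noteq> b" "f = {a,b}" by blast
    have e: "{a,b} \<in> E" using f ab by simp
    have e': "{b,a} \<in> E" using e by (simp add: insert_commute)
    define A where "A = side V E a b"
    define B where "B = side V E b a"
    define EA where "EA = {f\<in>E. f \<subseteq> A}"
    define EB where "EB = {f\<in>E. f \<subseteq> B}"
    have tA: "tree A EA" unfolding A_def EA_def by (rule side_tree[OF g ac e])
    have tB: "tree B EB" unfolding B_def EB_def by (rule side_tree[OF g ac e'])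
    have AV: "A \<subseteq> V" "B \<subseteq> V" unfolding A_def B_def by (simp_all add: side_sub)
    have cov: "V = A \<union> B" using side_cover[OF g c e] AV unfolding A_def B_def by blast
    have disj: "A \<inter> B = {}" using side_disj[OF g ac e ab(1)] unfolding A_def B_def .
    have aB: "a \<in> B" unfolding B_def by (rule side_b[OF g e'])
    have bA: "b \<in> A" unfolding A_def by (rule side_b[OF g e])
    have fA: "finite A" "finite B" using AV fV finite_subset by auto
    have cA: "card A < card V"
    proof (rule psubset_card_mono[OF fV])
      show "A \<subset> V" using AV(1) aB disj cov by blast
    qed
    have cB: "card B < card V"
    proof (rule psubset_card_mono[OF fV])
      show "B \<subset> V" using AV(2) bA disj cov by blast
    qed
    have IA: "card EA + 1 \<le> card A" using less.hyps[OF _ tA] cA by simp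
    have IB: "card EB + 1 \<le> card B" using less.hyps[OF _ tB] cB by simp
    have Esub: "E \<subseteq> insert {a,b} (EA \<union> EB)"
    proof
      fix h assume h: "h \<in> E"
      show "h \<in> insert {a,b} (EA \<union> EB)"
      proof (cases "h = {a,b}")
        case False
        have "h \<subseteq> A \<or> h \<subseteq> B" using side_edge[OF g c e h False] unfolding A_def B_def .
        then show ?thesis using h unfolding EA_def EB_def by blast
      qed simp
    qed
    have fEAB: "finite (EA \<union> EB)" using fE unfolding EA_def EB_def by simp
    have "card E \<le> card (insert {a,b} (EA \<union> EB))"
      using card_mono[OF _ Esub] fEAB by simp
    also have "\<dots> \<le> Suc (card (EA \<union> EB))" using card_insert_if[OF fEAB, of "{a,b}"] by (simp only: split: if_splits) simp_all
    also have "\<dots> \<le> Suc (card EA + card EB)" using card_Un_le[of EA EB] by simp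
    finally have "card E \<le> Suc (card EA + card EB)" .
    moreover have "card V = card A + card B" using cov disj fA card_Un_disjoint by metis
    ultimately show ?thesis using IA IB by simp
  qed
qed


lemma leave:
  assumes "(adj G)\<^sup>*\<^sup>* x y" "x \<in> W" "y \<notin> W"
  shows "\<exists>a b. a \<in> W \<and> b \<notin> W \<and> adj G a b"
  using assms
proof (induction rule: rtranclp_induct)
  case base then show ?case by simp
next
  case (step y z)
  show ?case
  proof (cases "y \<in> W")
    case True then show ?thesis using step by blast
  next
    case False then show ?thesis using step by blast
  qed
qed

lemma grow:
  assumes t: "tree S ES"
  shows "j < card S \<Longrightarrow> \<exists>V' E'. V' \<subseteq> S \<and> E' \<subseteq> ES \<and> card V' = j + 1 \<and> card E' = j \<and>
            graph V' E' \<and> connected_graph V' E'"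
proof (induction j)
  have g: "graph S ES" and c: "connected_graph S ES" using t by (simp_all add: tree_iff)
  case 0
  then have "S \<noteq> {}" by auto
  then obtain x where x: "x \<in> S" by blast
  have "graph {x} {}" unfolding graph_def by simp
  moreover have "connected_graph {x} {}" unfolding connected_graph_def by simp
  ultimately show ?case using x by (intro exI[of _ "{x}"] exI[of _ "{}"]) simp
next
  have g: "graph S ES" and c: "connected_graph S ES" using t by (simp_all add: tree_iff)
  case (Suc j)
  then obtain V' E' where V': "V' \<subseteq> S" "E' \<subseteq> ES" "card V' = j + 1" "card E' = j"
    "graph V' E'" "connected_graph V' E'" by auto
  have fS: "finite S" using g by (rule graph_finV)
  have fV: "finite V'" using fS V'(1) finite_subset by auto
  have fE: "finite E'" using V'(5) by (rule graph_finE)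
  have "V' \<noteq> S" using V'(3) Suc.prems by auto
  then obtain y where y: "y \<in> S" "y \<notin> V'" using V'(1) by blast
  have "V' \<noteq> {}" using V'(6) unfolding connected_graph_def by simp
  then obtain x where x: "x \<in> V'" by blast
  have "(adj ES)\<^sup>*\<^sup>* x y" using c x y V'(1) unfolding connected_graph_def by blast
  then obtain a b where ab: "a \<in> V'" "b \<notin> V'" "adj ES a b" using leave[of ES x y V'] x y by blast
  have abE: "{a,b} \<in> ES" "a \<noteq> b" using ab(3) unfolding adj_def by auto
  have bS: "b \<in> S" using graph_edge[OF g abE(1)] by simp
  have notin: "{a,b} \<notin> E'"
  proof
    assume "{a,b} \<in> E'"
    then have "b \<in> V'" using graph_edge[OF V'(5)] by simp
    then show False using ab(2) by simp
  qed
  define V'' where "V'' = insert b V'"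
  define E'' where "E'' = insert {a,b} E'"
  have c1: "card V'' = Suc j + 1" unfolding V''_def using fV ab(2) V'(3) by simp
  have c2: "card E'' = Suc j" unfolding E''_def using fE notin V'(4) by simp
  have g'': "graph V'' E''"
    unfolding graph_def
  proof (intro conjI ballI)
    show "finite V''" unfolding V''_def using fV by simp
    fix h assume "h \<in> E''"
    then consider "h = {a,b}" | "h \<in> E'" unfolding E''_def by blast
    then show "\<exists>x y. x \<in> V'' \<and> y \<in> V'' \<and> x \<noteq> y \<and> h = {x, y}"
    proof cases
      case 1 then show ?thesis using ab(1) abE(2) unfolding V''_def by blast
    next
      case 2
      then have "\<exists>x y. x \<in> V' \<and> y \<in> V' \<and> x \<noteq> y \<and> h = {x, y}" using V'(5) unfolding graph_def by simp
      then show ?thesis unfolding V''_def by blast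
    qed
  qed
  have reach: "(adj E'')\<^sup>*\<^sup>* a z" if z: "z \<in> V''" for z
  proof (cases "z = b")
    case True
    have "adj E'' a b" using abE unfolding adj_def E''_def by simp
    then show ?thesis using True by simp
  next
    case False
    then have "z \<in> V'" using z unfolding V''_def by simp
    then have "(adj E')\<^sup>*\<^sup>* a z" using V'(6) ab(1) unfolding connected_graph_def by blast
    then show ?thesis using rtr_mono[of E' a z E''] unfolding E''_def by blast
  qed
  have "connected_graph V'' E''" using conn_root[of a V'' E''] reach ab(1) unfolding V''_def by blast
  moreover have "V'' \<subseteq> S" "E'' \<subseteq> ES" using V'(1,2) bS abE(1) unfolding V''_def E''_def by auto
  ultimately show ?case using c1 c2 g'' by blast
qed

lemma subtree_exists:
  assumes t: "tree S ES" and k: "k < card S"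
  shows "\<exists>V' E'. subgraph V' E' S ES \<and> tree V' E' \<and> card E' = k"
proof -
  obtain V' E' where V': "V' \<subseteq> S" "E' \<subseteq> ES" "card E' = k" "graph V' E'" "connected_graph V' E'"
    using grow[OF t k] by blast
  have "acyc S ES" using t by (simp add: tree_iff)
  then have "acyc V' E'" using acyc_sub V'(1,2) by blast
  then have "tree V' E'" using V' by (simp add: tree_iff)
  moreover have "subgraph V' E' S ES" unfolding subgraph_def using V' by simp
  ultimately show ?thesis using V'(3) by blast
qed


lemma card_le1: "(\<forall>p\<in>F. \<forall>q\<in>F. p = q) \<Longrightarrow> card F \<le> 1"
proof (cases "finite F")
  case True
  assume "\<forall>p\<in>F. \<forall>q\<in>F. p = q"
  then show ?thesis using card_le_Suc0_iff_eq[OF True] by simp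
qed simp

lemma tau_one:
  assumes ex: "\<exists>V' E'. subgraph V' E' VB EB \<and> tree V' E' \<and> card E' = k"
    and meet: "\<And>V1 E1 V2 E2. subgraph V1 E1 VB EB \<Longrightarrow> tree V1 E1 \<Longrightarrow> card E1 = k \<Longrightarrow>
       subgraph V2 E2 VB EB \<Longrightarrow> tree V2 E2 \<Longrightarrow> card E2 = k \<Longrightarrow> V1 \<inter> V2 \<noteq> {}"
  shows "tau k VB EB = 1"
proof -
  define P where "P F \<longleftrightarrow> (\<forall>(V', E') \<in> F. subgraph V' E' VB EB \<and> tree V' E' \<and> card E' = k) \<and>
      (\<forall>p\<in>F. \<forall>q\<in>F. p \<noteq> q \<longrightarrow> fst p \<inter> fst q = {})" for F :: "('a set \<times> 'a set set) set"
  define M where "M = {card F | F. P F}"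
  have t: "tau k VB EB = Max M" unfolding tau_def M_def P_def by simp
  obtain V' E' where V': "subgraph V' E' VB EB" "tree V' E'" "card E' = k" using ex by blast
  have PV: "P {(V', E')}" unfolding P_def using V' by (simp only: ball_simps Ball_def singleton_iff) auto
  have one: "1 \<in> M" unfolding M_def mem_Collect_eq using PV by (intro exI[of _ "{(V',E')}"]) simp
  have le: "n \<le> 1" if "n \<in> M" for n
  proof -
    obtain F where F: "n = card F" "P F" using \<open>n \<in> M\<close> unfolding M_def by blast
    have "\<forall>p\<in>F. \<forall>q\<in>F. p = q"
    proof (intro ballI)
      fix p q assume pq: "p \<in> F" "q \<in> F"
      obtain V1 E1 where p: "p = (V1, E1)" by (cases p)
      obtain V2 E2 where q: "q = (V2, E2)" by (cases q)
      have 1: "subgraph V1 E1 VB EB \<and> tree V1 E1 \<and> card E1 = k" using F(2) pq(1) p unfolding P_def by auto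
      have 2: "subgraph V2 E2 VB EB \<and> tree V2 E2 \<and> card E2 = k" using F(2) pq(2) q unfolding P_def by auto
      have "V1 \<inter> V2 \<noteq> {}" using meet 1 2 by blast
      moreover have "p \<noteq> q \<longrightarrow> fst p \<inter> fst q = {}" using F(2) pq unfolding P_def by blast
      ultimately show "p = q" using p q by auto
    qed
    then show ?thesis using F(1) card_le1 by blast
  qed
  have "finite M" using le by (meson finite_atMost finite_subset subsetI atMost_iff)
  then have "Max M = 1" using one le by (intro Max_eqI) auto
  then show ?thesis using t by simp
qed


lemma nest:
  assumes g: "graph V E" and ac: "acyc V E" and e: "{u,w} \<in> E" "u \<noteq> w"
    and e2: "{w,z} \<in> E" "z \<noteq> w" "z \<noteq> u"
  shows "side V E w z \<subseteq> side V E u w"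
proof
  fix x assume x: "x \<in> side V E w z"
  let ?F = "E - {{w,z}}" and ?G = "E - {{u,w}}"
  have nr: "\<not> (adj ?F)\<^sup>*\<^sup>* z w" using no_reach[OF g ac e2(1)] e2(2) by auto
  have zs: "z \<in> side V E u w"
  proof -
    have "{w,z} \<noteq> {u,w}" using e2 by (metis doubleton_eq_iff)
    then have "adj ?G w z" using e2 unfolding adj_def by auto
    then show ?thesis using side_close[OF g side_b[OF g e(1)]] by blast
  qed
  have "(adj ?F)\<^sup>*\<^sup>* z x" using x unfolding side_def by simp
  then show "x \<in> side V E u w"
  proof (induction rule: rtranclp_induct)
    case base then show ?case by (rule zs)
  next
    case (step y y')
    have yw: "y \<noteq> w" using step(1) nr by blast
    have y'w: "y' \<noteq> w" using step(1,2) nr by (meson rtranclp.rtrancl_into_rtrancl)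
    have "{y,y'} \<noteq> {u,w}" using yw y'w by (metis doubleton_eq_iff)
    then have "adj ?G y y'" using step(2) unfolding adj_def by auto
    then show ?case using side_close[OF g step(3)] by blast
  qed
qed

lemma decomp:
  assumes g: "graph V E" and ac: "acyc V E" and e: "{u,w} \<in> E" "u \<noteq> w"
    and x: "x \<in> side V E u w"
  shows "x = w \<or> (\<exists>z. {w,z} \<in> E \<and> z \<noteq> w \<and> z \<noteq> u \<and> x \<in> side V E w z)"
proof -
  let ?G = "E - {{u,w}}"
  have "(adj ?G)\<^sup>*\<^sup>* w x" using x unfolding side_def by simp
  then show ?thesis
  proof (induction rule: rtranclp_induct)
    case base then show ?case by simp
  next
    case (step y y')
    have y'E: "{y,y'} \<in> E" "y \<noteq> y'" "{y,y'} \<noteq> {u,w}" using step(2) unfolding adj_def by auto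
    from step(3) show ?case
    proof
      assume yw: "y = w"
      have "y' \<noteq> u" using y'E yw by (auto simp: insert_commute)
      moreover have "y' \<in> side V E w y'" using side_b[OF g] y'E yw by simp
      ultimately show ?thesis using y'E yw by blast
    next
      assume "\<exists>z. {w,z} \<in> E \<and> z \<noteq> w \<and> z \<noteq> u \<and> y \<in> side V E w z"
      then obtain z where z: "{w,z} \<in> E" "z \<noteq> w" "z \<noteq> u" "y \<in> side V E w z" by blast
      have yw: "y \<noteq> w" using side_a[OF g ac z(1)] z(2,4) by auto
      show ?thesis
      proof (cases "{y,y'} = {w,z}")
        case True
        then have "y' = w" using yw by (metis doubleton_eq_iff)
        then show ?thesis by simp
      next
        case False
        then have "adj (E - {{w,z}}) y y'" using y'E unfolding adj_def by auto
        then have "y' \<in> side V E w z" using side_close[OF g z(4)] by blast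
        then show ?thesis using z by blast
      qed
    qed
  qed
qed

lemma avoid:
  assumes g: "graph V E" and g1: "graph V1 E1" and E1: "E1 \<subseteq> E" and w: "w \<notin> V1"
    and c1: "connected_graph V1 E1" and x: "x \<in> V1" "x \<in> side V E w z"
  shows "V1 \<subseteq> side V E w z"
proof
  fix y assume y: "y \<in> V1"
  have "(adj E1)\<^sup>*\<^sup>* x y" using c1 x y unfolding connected_graph_def by blast
  then show "y \<in> side V E w z"
  proof (induction rule: rtranclp_induct)
    case base then show ?case using x by simp
  next
    case (step a b)
    have ab: "{a,b} \<in> E1" "a \<noteq> b" using step(2) unfolding adj_def by auto
    have "a \<in> V1" "b \<in> V1" using graph_edge[OF g1 ab(1)] by auto
    then have "a \<noteq> w" "b \<noteq> w" using w by auto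
    then have "{a,b} \<noteq> {w,z}" by (metis doubleton_eq_iff)
    then have "adj (E - {{w,z}}) a b" using ab E1 unfolding adj_def by auto
    then show ?case using side_close[OF g step(3)] by blast
  qed
qed


theorem lemma7p1:
  fixes s k :: nat and V :: "'a set" and E :: "'a set set"
  assumes "s \<ge> 3" and "k \<ge> 1"
    and "tree V E"
    and "\<forall>v\<in>V. degree E v \<le> s"
    and "card V \<ge> k + 1"
  shows "\<exists>VB EB. branch VB EB V E \<and> card VB \<le> (s - 1) * k + 1 \<and> tau k VB EB = 1"
proof -
  have g: "graph V E" and c: "connected_graph V E" and ac: "acyc V E"
    using assms(3) by (simp_all add: tree_iff)
  have fV: "finite V" using g by (rule graph_finV)
  have fE: "finite E" using g by (rule graph_finE)
  define P where "P p \<longleftrightarrow> {fst p, snd p} \<in> E \<and> fst p \<noteq> snd p \<and> k + 1 \<le> card (side V E (fst p) (snd p))"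
    for p :: "'a \<times> 'a"
  show ?thesis
  proof (cases "\<exists>p. P p")
    case True
    then obtain p where p: "P p" "\<forall>q. P q \<longrightarrow> card (side V E (fst p) (snd p)) \<le> card (side V E (fst q) (snd q))"
      using ex_has_least_nat[of P _ "\<lambda>p. card (side V E (fst p) (snd p))"] by blast
    obtain u w where uw: "p = (u, w)" by (cases p)
    have e: "{u,w} \<in> E" "u \<noteq> w" "k + 1 \<le> card (side V E u w)" using p(1) uw unfolding P_def by auto
    have e': "{w,u} \<in> E" using e(1) by (simp add: insert_commute)
    have minimal: "\<And>a b. P (a,b) \<Longrightarrow> card (side V E u w) \<le> card (side V E a b)"
      using p(2) uw by fastforce
    define B where "B = side V E u w"
    define EB where "EB = {f\<in>E. f \<subseteq> B}"
    have tB: "tree B EB" unfolding B_def EB_def by (rule side_tree[OF g ac e(1)])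
    have BV: "B \<subseteq> V" unfolding B_def by (rule side_sub)
    have fB: "finite B" using BV fV finite_subset by auto
    have wB: "w \<in> B" unfolding B_def by (rule side_b[OF g e(1)])
    have VB: "V - B = side V E w u"
      using side_cover[OF g c e(1)] side_disj[OF g ac e(1,2)] side_sub[of V E w u] unfolding B_def by blast
    have uVB: "u \<in> V - B" using VB side_b[OF g e'] by simp
    have EVB: "{f\<in>E. f \<inter> B = {}} = {f\<in>E. f \<subseteq> side V E w u}"
      using graph_edge_sub[OF g] VB by blast
    have branch: "branch B EB V E"
      unfolding branch_def
    proof (intro conjI disjI2)
      show "subgraph B EB V E" unfolding subgraph_def using tB BV unfolding EB_def by (simp add: tree_iff)
      show "tree B EB" by (rule tB)
      show "V - B \<noteq> {}" using uVB by blast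
      show "tree (V - B) {e \<in> E. e \<inter> B = {}}" unfolding EVB VB by (rule side_tree[OF g ac e'])
    qed
    define N where "N = {z. {w,z} \<in> E \<and> z \<noteq> w \<and> z \<noteq> u}"
    define N' where "N' = {z. {w,z} \<in> E \<and> z \<noteq> w}"
    have NN': "N = N' - {u}" unfolding N_def N'_def by auto
    have uN': "u \<in> N'" unfolding N'_def using e' e(2) by simp
    have fN': "finite N'"
    proof (rule finite_subset[OF _ fV])
      show "N' \<subseteq> V" unfolding N'_def using graph_edge[OF g] by blast
    qed
    have "card N' \<le> degree E w"
      unfolding degree_def
    proof (rule card_inj_on_le)
      show "inj_on (\<lambda>z. {w,z}) N'" unfolding inj_on_def N'_def by (metis doubleton_eq_iff)
      show "(\<lambda>z. {w,z}) ` N' \<subseteq> {e \<in> E. w \<in> e}" unfolding N'_def by auto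
      show "finite {e \<in> E. w \<in> e}" using fE by simp
    qed
    moreover have "degree E w \<le> s" using assms(4) BV wB by auto
    ultimately have cN: "card N \<le> s - 1" using NN' uN' fN' by simp
    have fN: "finite N" using NN' fN' by simp
    have sidek: "card (side V E w z) \<le> k" if z: "z \<in> N" for z
    proof (rule ccontr)
      assume "\<not> card (side V E w z) \<le> k"
      then have "P (w, z)" using z unfolding P_def N_def by auto
      then have le: "card B \<le> card (side V E w z)" using minimal unfolding B_def by blast
      have zE: "{w,z} \<in> E" "z \<noteq> w" "z \<noteq> u" using z unfolding N_def by auto
      have sub: "side V E w z \<subseteq> B" unfolding B_def by (rule nest[OF g ac e(1,2) zE])
      have "w \<notin> side V E w z" using side_a[OF g ac zE(1)] zE(2) by auto
      then have "side V E w z \<subset> B" using sub wB by blast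
      then have "card (side V E w z) < card B" using psubset_card_mono[OF fB] by blast
      then show False using le by simp
    qed
    have Bsub: "B \<subseteq> insert w (\<Union>z\<in>N. side V E w z)"
    proof
      fix x assume "x \<in> B"
      then have "x = w \<or> (\<exists>z. {w,z} \<in> E \<and> z \<noteq> w \<and> z \<noteq> u \<and> x \<in> side V E w z)"
        using decomp[OF g ac e(1,2)] unfolding B_def by blast
      then show "x \<in> insert w (\<Union>z\<in>N. side V E w z)" unfolding N_def by blast
    qed
    have fU: "finite (\<Union>z\<in>N. side V E w z)"
      by (rule finite_UN_I[OF fN]) (rule finite_subset[OF side_sub fV])
    have "card B \<le> card (insert w (\<Union>z\<in>N. side V E w z))" using card_mono[OF _ Bsub] fU by simp
    also have "\<dots> \<le> Suc (card (\<Union>z\<in>N. side V E w z))"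
      using card_insert_if[OF fU, of w] by (simp only: split: if_splits) simp_all
    also have "\<dots> \<le> Suc (\<Sum>z\<in>N. card (side V E w z))" using card_UN_le[OF fN, of "\<lambda>z. side V E w z"] by simp
    also have "\<dots> \<le> Suc (card N * k)" using sum_bounded_above[of N "\<lambda>z. card (side V E w z)" k] sidek by simp
    also have "\<dots> \<le> Suc ((s - 1) * k)" using cN by simp
    finally have cardB: "card B \<le> (s - 1) * k + 1" by simp
    have wIn: "w \<in> V1" if s1: "subgraph V1 E1 B EB" "tree V1 E1" "card E1 = k" for V1 E1
    proof (rule ccontr)
      assume wn: "w \<notin> V1"
      have g1: "graph V1 E1" and c1: "connected_graph V1 E1" using s1(2) by (simp_all add: tree_iff)
      have cV1: "k + 1 \<le> card V1" using tree_card[OF s1(2)] s1(3) by simp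
      have V1B: "V1 \<subseteq> B" "E1 \<subseteq> EB" using s1(1) unfolding subgraph_def by auto
      have "V1 \<noteq> {}" using c1 unfolding connected_graph_def by simp
      then obtain x where x: "x \<in> V1" by blast
      then have "x \<in> B" "x \<noteq> w" using V1B wn by auto
      then obtain z where z: "z \<in> N" "x \<in> side V E w z"
        using decomp[OF g ac e(1,2)] unfolding B_def N_def by blast
      have E1E: "E1 \<subseteq> E" using V1B(2) unfolding EB_def by auto
      have "V1 \<subseteq> side V E w z" by (rule avoid[OF g g1 E1E wn c1 x z(2)])
      then have "card V1 \<le> card (side V E w z)"
        using card_mono[OF finite_subset[OF side_sub fV]] by blast
      then show False using sidek[OF z(1)] cV1 by simp
    qed
    have "tau k B EB = 1"
    proof (rule tau_one)
      show "\<exists>V' E'. subgraph V' E' B EB \<and> tree V' E' \<and> card E' = k"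
        using subtree_exists[OF tB] e(3) unfolding B_def by simp
      fix V1 E1 V2 E2
      assume "subgraph V1 E1 B EB" "tree V1 E1" "card E1 = k"
        "subgraph V2 E2 B EB" "tree V2 E2" "card E2 = k"
      then have "w \<in> V1" "w \<in> V2" using wIn by blast+
      then show "V1 \<inter> V2 \<noteq> {}" by blast
    qed
    then show ?thesis using branch cardB by blast
  next
    case False
    then have small: "\<And>a b. {a,b} \<in> E \<Longrightarrow> a \<noteq> b \<Longrightarrow> card (side V E a b) \<le> k"
      unfolding P_def by fastforce
    have branch: "branch V E V E"
      unfolding branch_def subgraph_def using assms(3) g by simp
    have "card V \<ge> 2" using assms(2,5) by simp
    then obtain x y where xy: "x \<in> V" "y \<in> V" "x \<noteq> y"
      by (metis One_nat_def card_le_Suc0_iff_eq not_less_eq_eq numeral_2_eq_2 fV)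
    have "(adj E)\<^sup>*\<^sup>* x y" using c xy unfolding connected_graph_def by blast
    then obtain z where "adj E x z" using xy(3) by (metis converse_rtranclpE)
    then have xz: "{x,z} \<in> E" "x \<noteq> z" unfolding adj_def by auto
    have cov: "V \<subseteq> side V E x z \<union> side V E z x" using side_cover[OF g c xz(1)] by blast
    have fs: "finite (side V E x z)" "finite (side V E z x)"
      by (rule finite_subset[OF side_sub fV])+
    have "card V \<le> card (side V E x z \<union> side V E z x)" using card_mono[OF _ cov] fs by simp
    also have "\<dots> \<le> card (side V E x z) + card (side V E z x)" by (rule card_Un_le)
    also have "\<dots> \<le> k + k" using small[OF xz] small[of z x] xz by (simp add: insert_commute add_mono)
    finally have cV: "card V \<le> 2 * k" by simp
    have "2 \<le> s - 1" using assms(1) by linarith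
    then have "2 * k \<le> (s - 1) * k" by (rule mult_le_mono1)
    then have cardV: "card V \<le> (s - 1) * k + 1" using cV by linarith
    have "tau k V E = 1"
    proof (rule tau_one)
      show "\<exists>V' E'. subgraph V' E' V E \<and> tree V' E' \<and> card E' = k"
        using subtree_exists[OF assms(3)] assms(5) by simp
      fix V1 E1 V2 E2
      assume a: "subgraph V1 E1 V E" "tree V1 E1" "card E1 = k"
        "subgraph V2 E2 V E" "tree V2 E2" "card E2 = k"
      show "V1 \<inter> V2 \<noteq> {}"
      proof
        assume d: "V1 \<inter> V2 = {}"
        have c1: "k + 1 \<le> card V1" using tree_card[OF a(2)] a(3) by simp
        have c2: "k + 1 \<le> card V2" using tree_card[OF a(5)] a(6) by simp
        have sub: "V1 \<union> V2 \<subseteq> V" using a(1,4) unfolding subgraph_def by auto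
        have f12: "finite V1" "finite V2" using sub fV finite_subset by auto
        have "card V1 + card V2 = card (V1 \<union> V2)" using card_Un_disjoint[OF f12 d] by simp
        also have "\<dots> \<le> card V" using card_mono[OF fV sub] .
        finally show False using c1 c2 cV by simp
      qed
    qed
    then show ?thesis using branch cardV by blast
  qed
qed

end
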